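(* Let $\lambda$ be a partition (respectively a strict partition) and let $c\ge1$. Then the number of pairs $(T,u)$, where $T$ is a standard Young tableau of shape $[\lambda]$ (respectively a shifted standard Young tableau of shape $[\lambda]^{\mathrm{sh}}$) and $(T,u)$ is a horizontal adjacency lying in column $c$, equals the number of standard Young tableaux of shape $[\lambda]$ (respectively shifted standard Young tableaux of shape $[\lambda]^{\mathrm{sh}}$) whose largest entry $|\lambda|$ lies in a column with index at least $c+1$.
   Context: Matrix coordinates (row $i$, column $j$). $[\lambda]=\{(i,j):i\in[\ell(\lambda)],j\in[\lambda_i]\}$; for strict $\lambda$, $[\lambda]^{\mathrm{sh}}=\{(i,j+i-1):i\in[\ell(\lambda)],j\in[\lambda_i]\}$. A (shifted) standard Young tableau is a bijection from the cell set $D$ to $[|\lambda|]$ increasing along rows (left to right) and columns (top to bottom). For such $T$ and $u=(i,j)\in D$, $(T,u)$ is a horizontal adjacency if $(i,j+1)\in D$ and $T(i,j+1)=T(u)+1$; it lies in column $j$ (and row $i$). *)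

theory Defs
  imports Main
begin

(* Cells are (row, column), both 1-indexed (matrix coordinates). *)

definition partition :: "nat list \<Rightarrow> bool" where
  "partition lam \<longleftrightarrow> sorted_wrt (\<ge>) lam \<and> (\<forall>x\<in>set lam. 0 < x)"

definition strict_partition :: "nat list \<Rightarrow> bool" where
  "strict_partition lam \<longleftrightarrow> sorted_wrt (>) lam \<and> (\<forall>x\<in>set lam. 0 < x)"

definition size_part :: "nat list \<Rightarrow> nat" where
  "size_part lam = sum_list lam"

definition young_diagram :: "nat list \<Rightarrow> (nat \<times> nat) set" where
  "young_diagram lam = {(i, j). 1 \<le> i \<and> i \<le> length lam \<and> 1 \<le> j \<and> j \<le> lam ! (i - 1)}"

definition shifted_diagram :: "nat list \<Rightarrow> (nat \<times> nat) set" where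
  "shifted_diagram lam = {(i, j + i - 1) | i j. 1 \<le> i \<and> i \<le> length lam \<and> 1 \<le> j \<and> j \<le> lam ! (i - 1)}"

(* To make the set of tableaux a set of
   functions, T is required to be 0 outside D. *)
definition standard_tableau :: "(nat \<times> nat) set \<Rightarrow> nat \<Rightarrow> (nat \<times> nat \<Rightarrow> nat) \<Rightarrow> bool" where
  "standard_tableau D n T \<longleftrightarrow>
     bij_betw T D {1..n} \<and> (\<forall>u. u \<notin> D \<longrightarrow> T u = 0) \<and>
     (\<forall>i j. (i, j) \<in> D \<and> (i, j + 1) \<in> D \<longrightarrow> T (i, j) < T (i, j + 1)) \<and>
     (\<forall>i j. (i, j) \<in> D \<and> (i + 1, j) \<in> D \<longrightarrow> T (i, j) < T (i + 1, j))"

definition horiz_adj :: "(nat \<times> nat) set \<Rightarrow> (nat \<times> nat \<Rightarrow> nat) \<Rightarrow> nat \<times> nat \<Rightarrow> bool" where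
  "horiz_adj D T u \<longleftrightarrow> u \<in> D \<and> (fst u, snd u + 1) \<in> D \<and> T (fst u, snd u + 1) = T u + 1"

end

theory Submission
  imports Defs "HOL-Library.FuncSet"
begin

lemma st_props:
  assumes "standard_tableau D n T"
  shows "finite D" "card D = n" "\<And>u. u \<in> D \<Longrightarrow> 1 \<le> T u \<and> T u \<le> n"
    "\<And>u v. u \<in> D \<Longrightarrow> v \<in> D \<Longrightarrow> T u = T v \<Longrightarrow> u = v"
    "\<And>k. 1 \<le> k \<Longrightarrow> k \<le> n \<Longrightarrow> \<exists>u\<in>D. T u = k"
    "\<And>u. u \<notin> D \<Longrightarrow> T u = 0"
    "\<And>i j. (i, j) \<in> D \<Longrightarrow> (i, j + 1) \<in> D \<Longrightarrow> T (i, j) < T (i, j + 1)"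
    "\<And>i j. (i, j) \<in> D \<Longrightarrow> (i + 1, j) \<in> D \<Longrightarrow> T (i, j) < T (i + 1, j)"
proof -
  have b: "bij_betw T D {1..n}" using assms unfolding standard_tableau_def by blast
  show "finite D" using bij_betw_finite[OF b] by simp
  show "card D = n" using bij_betw_same_card[OF b] by simp
  show "\<And>u. u \<in> D \<Longrightarrow> 1 \<le> T u \<and> T u \<le> n" using bij_betw_apply[OF b] by auto
  show "\<And>u v. u \<in> D \<Longrightarrow> v \<in> D \<Longrightarrow> T u = T v \<Longrightarrow> u = v" using b unfolding bij_betw_def inj_on_def by blast
  show "\<And>k. 1 \<le> k \<Longrightarrow> k \<le> n \<Longrightarrow> \<exists>u\<in>D. T u = k" using b unfolding bij_betw_def by (metis atLeastAtMost_iff imageE)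
qed (use assms in \<open>auto simp: standard_tableau_def\<close>)

lemma st_finite: "finite D \<Longrightarrow> finite {T. standard_tableau D n T}"
proof -
  assume f: "finite D"
  let ?S = "{T. standard_tableau D n T}"
  have inj: "inj_on (\<lambda>T. restrict T D) ?S"
  proof (rule inj_onI)
    fix T T' assume a: "T \<in> ?S" "T' \<in> ?S" "restrict T D = restrict T' D"
    show "T = T'"
    proof
      fix v
      show "T v = T' v"
      proof (cases "v \<in> D")
        case True
        then show ?thesis using fun_cong[OF a(3), of v] by simp
      next
        case False
        then show ?thesis using a(1,2) st_props(6)[of D n T v] st_props(6)[of D n T' v] by simp
      qed
    qed
  qed
  have "(\<lambda>T. restrict T D) ` ?S \<subseteq> PiE D (\<lambda>_. {0..n})"
    using st_props(3) by (fastforce simp: PiE_def Pi_def)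
  moreover have "finite (PiE D (\<lambda>_. {0..n}))" using f by (simp add: finite_PiE)
  ultimately show ?thesis using finite_imageD[OF _ inj] finite_subset by blast
qed

lemma st_ext:
  assumes st: "standard_tableau (D - {x}) m T" and x: "x \<in> D" "(fst x, snd x+1) \<notin> D" "(fst x+1, snd x) \<notin> D"
  shows "standard_tableau D (Suc m) (T(x := Suc m))"
proof -
  note p = st_props[OF st]
  have inj: "inj_on (T(x := Suc m)) D"
  proof (rule inj_onI)
    fix u v assume a: "u \<in> D" "v \<in> D" "(T(x := Suc m)) u = (T(x := Suc m)) v"
    show "u = v"
    proof (cases "u = x")
      case True
      show ?thesis
      proof (rule ccontr)
        assume "u \<noteq> v"
        then have "v \<in> D - {x}" "T v = Suc m" using a True by auto
        then show False using p(3)[of v] by simp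
      qed
    next
      case False
      show ?thesis
      proof (cases "v = x")
        case True
        then have "u \<in> D - {x}" "T u = Suc m" using a False by auto
        then show ?thesis using p(3)[of u] by simp
      next
        case False2: False
        then show ?thesis using a False p(4)[of u v] by simp
      qed
    qed
  qed
  have img: "(T(x := Suc m)) ` D = {1..Suc m}"
  proof
    show "(T(x := Suc m)) ` D \<subseteq> {1..Suc m}" using p(3) by fastforce
    show "{1..Suc m} \<subseteq> (T(x := Suc m)) ` D"
    proof
      fix k assume k: "k \<in> {1..Suc m}"
      show "k \<in> (T(x := Suc m)) ` D"
      proof (cases "k = Suc m")
        case True then show ?thesis using x by force
      next
        case False then obtain u where "u \<in> D - {x}" "T u = k" using p(5)[of k] k by auto
        then show ?thesis by (metis DiffE fun_upd_apply image_eqI singletonI)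
      qed
    qed
  qed
  show ?thesis unfolding standard_tableau_def
  proof (intro conjI allI impI)
    show "bij_betw (T(x := Suc m)) D {1..Suc m}" using inj img by (simp add: bij_betw_def)
    fix u assume "u \<notin> D" then show "(T(x := Suc m)) u = 0" using p(6) x by auto
  next
    fix i j assume a: "(i, j) \<in> D \<and> (i, j + 1) \<in> D"
    show "(T(x := Suc m)) (i, j) < (T(x := Suc m)) (i, j + 1)"
    proof -
      have "(i,j) \<noteq> x" using a x by auto
      then show ?thesis using a p(3)[of "(i,j)"] p(7)[of i j] by auto
    qed
  next
    fix i j assume a: "(i, j) \<in> D \<and> (i + 1, j) \<in> D"
    show "(T(x := Suc m)) (i, j) < (T(x := Suc m)) (i + 1, j)"
    proof -
      have "(i,j) \<noteq> x" using a x by auto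
      then show ?thesis using a p(3)[of "(i,j)"] p(8)[of i j] by auto
    qed
  qed
qed

lemma st_rem:
  assumes st: "standard_tableau D (Suc m) T" and x: "x \<in> D" "T x = Suc m"
  shows "standard_tableau (D - {x}) m (T(x := 0))" "(fst x, snd x+1) \<notin> D" "(fst x+1, snd x) \<notin> D"
proof -
  note p = st_props[OF st]
  show r: "(fst x, snd x+1) \<notin> D" using p(7)[of "fst x" "snd x"] p(3)[of "(fst x, snd x+1)"] x by auto
  show b: "(fst x+1, snd x) \<notin> D" using p(8)[of "fst x" "snd x"] p(3)[of "(fst x+1, snd x)"] x by auto
  have inj: "inj_on (T(x := 0)) (D - {x})" using p(4) by (auto simp: inj_on_def)
  have img: "(T(x := 0)) ` (D - {x}) = {1..m}"
  proof
    show "(T(x := 0)) ` (D - {x}) \<subseteq> {1..m}"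
    proof
      fix k assume "k \<in> (T(x := 0)) ` (D - {x})"
      then obtain u where u: "u \<in> D" "u \<noteq> x" "k = T u" by auto
      then have "T u \<noteq> Suc m" using p(4) x by metis
      then show "k \<in> {1..m}" using p(3)[OF u(1)] u by auto
    qed
    show "{1..m} \<subseteq> (T(x := 0)) ` (D - {x})"
    proof
      fix k assume k: "k \<in> {1..m}"
      then obtain u where u: "u \<in> D" "T u = k" using p(5)[of k] by auto
      then have "u \<noteq> x" using x k by auto
      then show "k \<in> (T(x := 0)) ` (D - {x})" using u by force
    qed
  qed
  show "standard_tableau (D - {x}) m (T(x := 0))" unfolding standard_tableau_def
    using inj img p(6,7,8) by (auto simp: bij_betw_def)
qed

definition corners :: "(nat \<times> nat) set \<Rightarrow> (nat \<times> nat) set" where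
  "corners D = {x \<in> D. (fst x, snd x+1) \<notin> D \<and> (fst x+1, snd x) \<notin> D}"

lemma decomp2:
  assumes fin: "finite D" and U: "finite U" and PU: "\<And>T u. P T u \<Longrightarrow> u \<in> U"
  shows "card {(T,u). standard_tableau D (Suc m) T \<and> P T u}
       = (\<Sum>x\<in>corners D. card {(T',u). standard_tableau (D - {x}) m T' \<and> P (T'(x := Suc m)) u})"
proof -
  define S where "S x = {(T,u). standard_tableau D (Suc m) T \<and> T x = Suc m \<and> P T u}" for x
  define R where "R x = {(T',u). standard_tableau (D - {x}) m T' \<and> P (T'(x := Suc m)) u}" for x
  have finS: "finite (S x)" for x
    by (rule finite_subset[of _ "{T. standard_tableau D (Suc m) T} \<times> U"])
       (use PU st_finite[OF fin] U in \<open>auto simp: S_def\<close>)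
  have eq: "{(T,u). standard_tableau D (Suc m) T \<and> P T u} = (\<Union>x\<in>corners D. S x)"
  proof (intro equalityI subsetI)
    fix z assume a: "z \<in> {(T,u). standard_tableau D (Suc m) T \<and> P T u}"
    obtain T u where z: "z = (T,u)" by (cases z)
    have st: "standard_tableau D (Suc m) T" and P: "P T u" using a z by auto
    obtain x where x: "x \<in> D" "T x = Suc m" using st_props(5)[OF st, of "Suc m"] by auto
    have "x \<in> corners D" using st_rem[OF st x] x by (auto simp: corners_def)
    then show "z \<in> (\<Union>x\<in>corners D. S x)" using st P x z by (auto simp: S_def)
  next
    fix z assume "z \<in> (\<Union>x\<in>corners D. S x)"
    then show "z \<in> {(T,u). standard_tableau D (Suc m) T \<and> P T u}" by (auto simp: S_def)
  qed
  have disj: "S x \<inter> S y = {}" if "x \<in> corners D" "y \<in> corners D" "x \<noteq> y" for x y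
  proof (rule ccontr)
    assume "S x \<inter> S y \<noteq> {}"
    then obtain T u where "(T,u) \<in> S x" "(T,u) \<in> S y" by auto
    then have "standard_tableau D (Suc m) T" "T x = Suc m" "T y = Suc m" by (auto simp: S_def)
    moreover have "x \<in> D" "y \<in> D" using that by (auto simp: corners_def)
    ultimately have "x = y" using st_props(4) by metis
    then show False using that by simp
  qed
  have cS: "card (S x) = card (R x)" if x: "x \<in> corners D" for x
  proof -
    have "S x = (\<lambda>(T',u). (T'(x := Suc m), u)) ` R x"
    proof (intro equalityI subsetI)
      fix z assume a: "z \<in> S x"
      obtain T u where z: "z = (T,u)" by (cases z)
      have st: "standard_tableau D (Suc m) T" "T x = Suc m" "P T u" using a z by (auto simp: S_def)
      have "x \<in> D" using x by (auto simp: corners_def)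
      then have "(T(x := 0), u) \<in> R x" using st_rem(1)[OF st(1) _ st(2)] st(2,3)
        by (auto simp: R_def fun_upd_idem)
      moreover have "T = (T(x := 0))(x := Suc m)" using st(2) by auto
      ultimately show "z \<in> (\<lambda>(T',u). (T'(x := Suc m), u)) ` R x" unfolding z by force
    next
      fix z assume "z \<in> (\<lambda>(T',u). (T'(x := Suc m), u)) ` R x"
      then obtain T' u where T': "z = (T'(x := Suc m), u)" "standard_tableau (D - {x}) m T'" "P (T'(x := Suc m)) u"
        by (auto simp: R_def)
      then show "z \<in> S x" using st_ext[OF T'(2)] x by (auto simp: S_def corners_def)
    qed
    moreover have "inj_on (\<lambda>(T',u). (T'(x := Suc m), u)) (R x)"
    proof (rule inj_onI)
      fix z1 z2 assume a: "z1 \<in> R x" "z2 \<in> R x" "(\<lambda>(T',u). (T'(x := Suc m), u)) z1 = (\<lambda>(T',u). (T'(x := Suc m), u)) z2"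
      obtain T1 u1 where z1: "z1 = (T1,u1)" by (cases z1)
      obtain T2 u2 where z2: "z2 = (T2,u2)" by (cases z2)
      have "T1 x = 0" using a(1) z1 st_props(6)[of "D - {x}" m T1 x] by (auto simp: R_def)
      moreover have "T2 x = 0" using a(2) z2 st_props(6)[of "D - {x}" m T2 x] by (auto simp: R_def)
      moreover have "T1(x := Suc m) = T2(x := Suc m)" "u1 = u2" using a(3) z1 z2 by auto
      ultimately show "z1 = z2" unfolding z1 z2 by (metis fun_upd_triv fun_upd_upd)
    qed
    ultimately show ?thesis by (simp add: card_image)
  qed
  have fc: "finite (corners D)" using fin by (auto simp: corners_def)
  have "card (\<Union>x\<in>corners D. S x) = (\<Sum>x\<in>corners D. card (S x))"
    by (rule card_UN_disjoint[OF fc]) (use finS disj in auto)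
  also have "\<dots> = (\<Sum>x\<in>corners D. card (R x))" using cS by (rule sum.cong[OF refl])
  finally show ?thesis unfolding eq R_def .
qed

lemma decomp1:
  assumes fin: "finite D"
  shows "card {T. standard_tableau D (Suc m) T \<and> Q T}
       = (\<Sum>x\<in>corners D. card {T'. standard_tableau (D - {x}) m T' \<and> Q (T'(x := Suc m))})"
proof -
  have h: "card {(T,u::unit). standard_tableau E k T \<and> Q' T} = card {T. standard_tableau E k T \<and> Q' T}" for E k Q'
  proof -
    have "{(T,u::unit). standard_tableau E k T \<and> Q' T} = {T. standard_tableau E k T \<and> Q' T} \<times> UNIV" by auto
    then show ?thesis by (simp add: card_cartesian_product)
  qed
  show ?thesis using decomp2[OF fin, of UNIV "\<lambda>T (u::unit). Q T" m] by (simp add: h)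
qed

definition sw :: "nat \<Rightarrow> (nat \<times> nat \<Rightarrow> nat) \<Rightarrow> (nat \<times> nat \<Rightarrow> nat)" where
  "sw m T = (\<lambda>v. if T v = Suc (Suc m) then Suc m else if T v = Suc m then Suc (Suc m) else T v)"

lemma sw_sw: "sw m (sw m T) = T"
  by (rule ext) (simp add: sw_def)

lemma sw_lt: "(a::nat) < b \<Longrightarrow> b \<le> Suc (Suc m) \<Longrightarrow> \<not> (a = Suc m \<and> b = Suc (Suc m)) \<Longrightarrow>
  (if a = Suc (Suc m) then Suc m else if a = Suc m then Suc (Suc m) else a)
  < (if b = Suc (Suc m) then Suc m else if b = Suc m then Suc (Suc m) else b)"
  by (simp split: if_split)

lemma sw_st:
  assumes st: "standard_tableau D (Suc (Suc m)) T"
    and hor: "\<And>i j. (i,j) \<in> D \<Longrightarrow> (i,j+1) \<in> D \<Longrightarrow> \<not> (T (i,j) = Suc m \<and> T (i,j+1) = Suc (Suc m))"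
    and ver: "\<And>i j. (i,j) \<in> D \<Longrightarrow> (i+1,j) \<in> D \<Longrightarrow> \<not> (T (i,j) = Suc m \<and> T (i+1,j) = Suc (Suc m))"
  shows "standard_tableau D (Suc (Suc m)) (sw m T)"
proof -
  note p = st_props[OF st]
  define \<tau> where "\<tau> k = (if k = Suc (Suc m) then Suc m else if k = Suc m then Suc (Suc m) else k)" for k :: nat
  have eq: "sw m T = \<tau> \<circ> T" by (rule ext) (simp add: sw_def \<tau>_def)
  have bt: "bij_betw \<tau> {1..Suc (Suc m)} {1..Suc (Suc m)}"
    by (rule bij_betw_byWitness[where f'=\<tau>]) (auto simp: \<tau>_def)
  have b: "bij_betw T D {1..Suc (Suc m)}" using st by (simp add: standard_tableau_def)
  show ?thesis unfolding standard_tableau_def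
  proof (intro conjI allI impI)
    show "bij_betw (sw m T) D {1..Suc (Suc m)}" unfolding eq using bij_betw_trans[OF b bt] .
    fix u assume "u \<notin> D" then show "sw m T u = 0" using p(6) by (simp add: sw_def)
  next
    fix i j assume a: "(i, j) \<in> D \<and> (i, j + 1) \<in> D"
    show "sw m T (i, j) < sw m T (i, j + 1)"
      unfolding sw_def using sw_lt[OF p(7)[of i j] _ hor[of i j]] a p(3)[of "(i,j+1)"] by blast
  next
    fix i j assume a: "(i, j) \<in> D \<and> (i + 1, j) \<in> D"
    show "sw m T (i, j) < sw m T (i + 1, j)"
      unfolding sw_def using sw_lt[OF p(8)[of i j] _ ver[of i j]] a p(3)[of "(i+1,j)"] by blast
  qed
qed

definition Aset :: "nat \<Rightarrow> (nat \<times> nat) set \<Rightarrow> nat \<Rightarrow> ((nat \<times> nat \<Rightarrow> nat) \<times> (nat \<times> nat)) set" where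
  "Aset c D n = {(T, u). standard_tableau D n T \<and> horiz_adj D T u \<and> snd u = c}"

definition Bset :: "nat \<Rightarrow> (nat \<times> nat) set \<Rightarrow> nat \<Rightarrow> nat \<Rightarrow> (nat \<times> nat \<Rightarrow> nat) set" where
  "Bset c D n k = {T. standard_tableau D n T \<and> (\<exists>u\<in>D. T u = k \<and> c + 1 \<le> snd u)}"

lemma sw_val: "sw m T v = Suc m \<longleftrightarrow> T v = Suc (Suc m)" "sw m T v = Suc (Suc m) \<longleftrightarrow> T v = Suc m"
  by (auto simp: sw_def)

lemma swap_a:
  assumes B: "T \<in> Bset c D (Suc (Suc m)) (Suc (Suc m))" and nB': "T \<notin> Bset c D (Suc (Suc m)) (Suc m)"
    and nJ: "\<forall>u. (T,u) \<in> Aset c D (Suc (Suc m)) \<longrightarrow> T u \<noteq> Suc m"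
  shows "sw m T \<in> Bset c D (Suc (Suc m)) (Suc m)" "sw m T \<notin> Bset c D (Suc (Suc m)) (Suc (Suc m))"
proof -
  have st: "standard_tableau D (Suc (Suc m)) T" using B by (simp add: Bset_def)
  note p = st_props[OF st]
  obtain q where q: "q \<in> D" "T q = Suc (Suc m)" "c + 1 \<le> snd q" using B by (auto simp: Bset_def)
  have small: "\<And>v. v \<in> D \<Longrightarrow> T v = Suc m \<Longrightarrow> snd v < c + 1" using nB' st by (force simp: Bset_def)
  have qq: "\<And>v. v \<in> D \<Longrightarrow> T v = Suc (Suc m) \<Longrightarrow> v = q" using p(4) q by metis
  have st': "standard_tableau D (Suc (Suc m)) (sw m T)"
  proof (rule sw_st[OF st])
    fix i j assume a: "(i,j) \<in> D" "(i,j+1) \<in> D"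
    show "\<not> (T (i,j) = Suc m \<and> T (i,j+1) = Suc (Suc m))"
    proof
      assume b: "T (i,j) = Suc m \<and> T (i,j+1) = Suc (Suc m)"
      then have "j < c + 1" using small[OF a(1)] by auto
      moreover have "(i,j+1) = q" using qq a b by auto
      ultimately have "j = c" using q by auto
      moreover have "((T,(i,j)) \<in> Aset c D (Suc (Suc m)))" using st a b \<open>j = c\<close>
        by (auto simp: Aset_def horiz_adj_def)
      ultimately show False using nJ b by auto
    qed
  next
    fix i j assume a: "(i,j) \<in> D" "(i+1,j) \<in> D"
    show "\<not> (T (i,j) = Suc m \<and> T (i+1,j) = Suc (Suc m))"
    proof
      assume b: "T (i,j) = Suc m \<and> T (i+1,j) = Suc (Suc m)"
      then have "j < c + 1" using small[OF a(1)] by auto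
      moreover have "(i+1,j) = q" using qq a b by auto
      ultimately show False using q by auto
    qed
  qed
  show "sw m T \<in> Bset c D (Suc (Suc m)) (Suc m)" using st' q by (auto simp: Bset_def sw_val)
  show "sw m T \<notin> Bset c D (Suc (Suc m)) (Suc (Suc m))" by (clarsimp simp: Bset_def sw_val) (use small in fastforce)
qed

lemma swap_b:
  assumes B': "T \<in> Bset c D (Suc (Suc m)) (Suc m)" and nB: "T \<notin> Bset c D (Suc (Suc m)) (Suc (Suc m))"
  shows "sw m T \<in> Bset c D (Suc (Suc m)) (Suc (Suc m))" "sw m T \<notin> Bset c D (Suc (Suc m)) (Suc m)"
    "\<forall>u. (sw m T,u) \<in> Aset c D (Suc (Suc m)) \<longrightarrow> sw m T u \<noteq> Suc m"
proof -
  have st: "standard_tableau D (Suc (Suc m)) T" using B' by (simp add: Bset_def)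
  note p = st_props[OF st]
  obtain q where q: "q \<in> D" "T q = Suc m" "c + 1 \<le> snd q" using B' by (auto simp: Bset_def)
  have small: "\<And>v. v \<in> D \<Longrightarrow> T v = Suc (Suc m) \<Longrightarrow> snd v < c + 1" using nB st by (force simp: Bset_def)
  have qq: "\<And>v. v \<in> D \<Longrightarrow> T v = Suc m \<Longrightarrow> v = q" using p(4) q by metis
  have st': "standard_tableau D (Suc (Suc m)) (sw m T)"
  proof (rule sw_st[OF st])
    fix i j assume a: "(i,j) \<in> D" "(i,j+1) \<in> D"
    show "\<not> (T (i,j) = Suc m \<and> T (i,j+1) = Suc (Suc m))"
    proof
      assume b: "T (i,j) = Suc m \<and> T (i,j+1) = Suc (Suc m)"
      then have "j + 1 < c + 1" using small[OF a(2)] by auto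
      moreover have "(i,j) = q" using qq a b by auto
      ultimately show False using q by auto
    qed
  next
    fix i j assume a: "(i,j) \<in> D" "(i+1,j) \<in> D"
    show "\<not> (T (i,j) = Suc m \<and> T (i+1,j) = Suc (Suc m))"
    proof
      assume b: "T (i,j) = Suc m \<and> T (i+1,j) = Suc (Suc m)"
      then have "j < c + 1" using small[OF a(2)] by auto
      moreover have "(i,j) = q" using qq a b by auto
      ultimately show False using q by auto
    qed
  qed
  show "sw m T \<in> Bset c D (Suc (Suc m)) (Suc (Suc m))" using st' q by (auto simp: Bset_def sw_val)
  show "sw m T \<notin> Bset c D (Suc (Suc m)) (Suc m)" by (clarsimp simp: Bset_def sw_val) (use small in fastforce)
  show "\<forall>u. (sw m T,u) \<in> Aset c D (Suc (Suc m)) \<longrightarrow> sw m T u \<noteq> Suc m"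
  proof (intro allI impI notI)
    fix u assume a: "(sw m T,u) \<in> Aset c D (Suc (Suc m))" "sw m T u = Suc m"
    then have u: "u \<in> D" "(fst u, snd u + 1) \<in> D" "sw m T (fst u, snd u + 1) = Suc (Suc m)"
      by (auto simp: Aset_def horiz_adj_def)
    then have "T (fst u, snd u + 1) = Suc m" "T u = Suc (Suc m)" using a(2) by (auto simp: sw_val)
    moreover have "T (fst u, snd u) < T (fst u, snd u + 1)" using p(7)[of "fst u" "snd u"] u by simp
    ultimately show False by simp
  qed
qed

lemma adj_restrict:
  assumes st: "standard_tableau (D - {x}) (Suc m) T'" and x: "x \<in> corners D"
  shows "(horiz_adj D (T'(x := Suc (Suc m))) u \<and> (T'(x := Suc (Suc m))) u \<noteq> Suc m) \<longleftrightarrow> horiz_adj (D - {x}) T' u"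
proof
  assume a: "horiz_adj D (T'(x := Suc (Suc m))) u \<and> (T'(x := Suc (Suc m))) u \<noteq> Suc m"
  have ux: "u \<noteq> x" using a x by (auto simp: horiz_adj_def corners_def)
  have rx: "(fst u, snd u + 1) \<noteq> x"
  proof
    assume "(fst u, snd u + 1) = x"
    then have "Suc (Suc m) = T' u + 1" using a ux by (auto simp: horiz_adj_def)
    then show False using a ux by simp
  qed
  show "horiz_adj (D - {x}) T' u" using a ux rx by (auto simp: horiz_adj_def)
next
  assume a: "horiz_adj (D - {x}) T' u"
  have ux: "u \<noteq> x" "(fst u, snd u + 1) \<noteq> x" "u \<in> D - {x}" "(fst u, snd u + 1) \<in> D - {x}"
    using a by (auto simp: horiz_adj_def)
  have "T' (fst u, snd u + 1) \<le> Suc m" using st_props(3)[OF st ux(4)] by simp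
  then have "T' u \<noteq> Suc m" using a by (auto simp: horiz_adj_def)
  then show "horiz_adj D (T'(x := Suc (Suc m))) u \<and> (T'(x := Suc (Suc m))) u \<noteq> Suc m"
    using a ux by (auto simp: horiz_adj_def)
qed

lemma main:
  assumes "finite D" "card D = n"
  shows "card (Bset c D n n) = card (Aset c D n) + card (Bset c D n 1)"
  using assms
proof (induction n arbitrary: D rule: less_induct)
  case (less n D)
  consider "n = 0" | "n = 1" | m where "n = Suc (Suc m)"
    by (metis One_nat_def not0_implies_Suc)
  then show ?case
  proof cases
    case 1
    then have "D = {}" using less by auto
    then show ?thesis by (simp add: Aset_def Bset_def horiz_adj_def)
  next
    case 2
    then obtain d where d: "D = {d}" using less(3) card_1_singletonE by metis
    have "Aset c D n = {}" unfolding d by (auto simp: Aset_def horiz_adj_def)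
    then show ?thesis using 2 by simp
  next
    case 3
    note fin = less(2)
    define N where "N = Suc (Suc m)"
    have nN: "n = N" using 3 N_def by simp
    define B where "B = Bset c D N N"
    define B' where "B' = Bset c D N (Suc m)"
    define C where "C = Bset c D N 1"
    define A where "A = Aset c D N"
    define A' where "A' = {(T,u). standard_tableau D (Suc (Suc m)) T \<and>
        (horiz_adj D T u \<and> snd u = c \<and> T u \<noteq> Suc m)}"
    define Adj where "Adj = {(T,u). (T,u) \<in> A \<and> T u = Suc m}"
    define J where "J = fst ` Adj"
    have finST: "finite {T. standard_tableau D N T}" using st_finite[OF fin] .
    have finB: "finite B" "finite B'" "finite C"
      using finST by (auto simp: B_def B'_def C_def Bset_def intro: finite_subset)
    have finA: "finite A"
      by (rule finite_subset[of _ "{T. standard_tableau D N T} \<times> D"])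
         (use finST fin in \<open>auto simp: A_def Aset_def horiz_adj_def\<close>)
    have IH: "card (Bset c (D - {x}) (Suc m) (Suc m)) = card (Aset c (D - {x}) (Suc m)) + card (Bset c (D - {x}) (Suc m) 1)"
      if "x \<in> corners D" for x
    proof -
      have "card (D - {x}) = Suc m" using that less(3) 3 fin by (auto simp: corners_def)
      then show ?thesis using less(1)[of "Suc m" "D - {x}"] 3 fin by auto
    qed
    have cB': "card B' = (\<Sum>x\<in>corners D. card (Bset c (D - {x}) (Suc m) (Suc m)))"
      unfolding B'_def Bset_def N_def
      apply (subst decomp1[OF fin])
      apply (rule sum.cong[OF refl])
      apply (rule arg_cong[where f=card])
      apply auto
      done
    have cC: "card C = (\<Sum>x\<in>corners D. card (Bset c (D - {x}) (Suc m) 1))"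
      unfolding C_def Bset_def N_def
      apply (subst decomp1[OF fin])
      apply (rule sum.cong[OF refl])
      apply (rule arg_cong[where f=card])
      apply auto
      done
    have cA': "card A' = (\<Sum>x\<in>corners D. card (Aset c (D - {x}) (Suc m)))"
      unfolding A'_def
    proof (subst decomp2[OF fin fin])
      show "\<And>T u. horiz_adj D T u \<and> snd u = c \<and> T u \<noteq> Suc m \<Longrightarrow> u \<in> D" by (auto simp: horiz_adj_def)
      show "(\<Sum>x\<in>corners D. card {(T', u). standard_tableau (D - {x}) (Suc m) T' \<and>
              horiz_adj D (T'(x := Suc (Suc m))) u \<and> snd u = c \<and> (T'(x := Suc (Suc m))) u \<noteq> Suc m}) =
            (\<Sum>x\<in>corners D. card (Aset c (D - {x}) (Suc m)))"
      proof (rule sum.cong[OF refl], rule arg_cong[where f=card])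
        fix x assume x: "x \<in> corners D"
        show "{(T', u). standard_tableau (D - {x}) (Suc m) T' \<and>
              horiz_adj D (T'(x := Suc (Suc m))) u \<and> snd u = c \<and> (T'(x := Suc (Suc m))) u \<noteq> Suc m}
              = Aset c (D - {x}) (Suc m)"
          unfolding Aset_def using adj_restrict[OF _ x] by blast
      qed
    qed
    have eqB': "card B' = card A' + card C"
      using cB' cC cA' IH by (simp add: sum.distrib[symmetric])
    have cA: "card A = card A' + card Adj"
    proof -
      have "A = A' \<union> Adj" by (auto simp: A_def A'_def Adj_def Aset_def N_def)
      moreover have "A' \<inter> Adj = {}" by (auto simp: A'_def Adj_def)
      moreover have "A' \<subseteq> A" "Adj \<subseteq> A" by (auto simp: A_def A'_def Adj_def Aset_def N_def)
      then have "finite A'" "finite Adj" using finA finite_subset by auto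
      ultimately show ?thesis by (simp add: card_Un_disjoint)
    qed
    have cJ: "card J = card Adj"
    proof -
      have "inj_on fst Adj"
      proof (rule inj_onI)
        fix z1 z2 assume a: "z1 \<in> Adj" "z2 \<in> Adj" "fst z1 = fst z2"
        obtain T u1 u2 where z: "z1 = (T,u1)" "z2 = (T,u2)" using a(3) by (cases z1, cases z2) auto
        have "standard_tableau D N T" "u1 \<in> D" "u2 \<in> D" "T u1 = Suc m" "T u2 = Suc m"
          using a z by (auto simp: Adj_def A_def Aset_def horiz_adj_def)
        then show "z1 = z2" using z st_props(4) by metis
      qed
      then show ?thesis by (simp add: J_def card_image)
    qed
    have JB: "J \<subseteq> B - B'"
    proof
      fix T assume "T \<in> J"
      then obtain u where u: "(T,u) \<in> A" "T u = Suc m" by (auto simp: J_def Adj_def)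
      then have st: "standard_tableau D N T" and u2: "u \<in> D" "(fst u, snd u + 1) \<in> D"
        "T (fst u, snd u + 1) = N" "snd u = c"
        by (auto simp: A_def Aset_def horiz_adj_def N_def)
      have "T \<in> B" using st u2 by (force simp: B_def Bset_def)
      moreover have "T \<notin> B'"
      proof
        assume "T \<in> B'"
        then obtain v where v: "v \<in> D" "T v = Suc m" "c + 1 \<le> snd v" by (auto simp: B'_def Bset_def)
        then have "v = u" using st_props(4)[OF st] u u2 by metis
        then show False using v u2 by simp
      qed
      ultimately show "T \<in> B - B'" by simp
    qed
    have swp: "card (B - B' - J) = card (B' - B)"
    proof (rule bij_betw_same_card[of "sw m"], rule bij_betw_byWitness[where f' = "sw m"])
      show "\<forall>a\<in>B - B' - J. sw m (sw m a) = a" by (simp add: sw_sw)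
      show "\<forall>a\<in>B' - B. sw m (sw m a) = a" by (simp add: sw_sw)
      show "sw m ` (B - B' - J) \<subseteq> B' - B"
      proof
        fix T' assume "T' \<in> sw m ` (B - B' - J)"
        then obtain T where T: "T' = sw m T" "T \<in> B" "T \<notin> B'" "T \<notin> J" by auto
        have "\<forall>u. (T,u) \<in> Aset c D (Suc (Suc m)) \<longrightarrow> T u \<noteq> Suc m"
          using T(4) by (force simp: J_def Adj_def A_def N_def)
        then show "T' \<in> B' - B" using swap_a[of T c D m] T by (simp add: B_def B'_def N_def)
      qed
      show "sw m ` (B' - B) \<subseteq> B - B' - J"
      proof
        fix T' assume "T' \<in> sw m ` (B' - B)"
        then obtain T where T: "T' = sw m T" "T \<in> B'" "T \<notin> B" by auto
        have s: "sw m T \<in> B" "sw m T \<notin> B'" "\<forall>u. (sw m T,u) \<in> A \<longrightarrow> sw m T u \<noteq> Suc m"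
          using swap_b[of T c D m] T by (simp_all add: B_def B'_def A_def N_def)
        have "sw m T \<notin> J" using s(3) by (auto simp: J_def Adj_def)
        then show "T' \<in> B - B' - J" using s T by simp
      qed
    qed
    have c1: "card B = card (B \<inter> B') + card (B - B')"
      using finB by (metis card_Int_Diff)
    have c2: "card B' = card (B' \<inter> B) + card (B' - B)"
      using finB by (metis card_Int_Diff)
    have c3: "card (B - B') = card (B - B' - J) + card J"
    proof -
      have "finite (B - B')" using finB by simp
      then have "card (B - B' - J) = card (B - B') - card J" using JB by (simp add: card_Diff_subset finite_subset)
      moreover have "card J \<le> card (B - B')" using JB \<open>finite (B - B')\<close> by (simp add: card_mono)
      ultimately show ?thesis by simp
    qed
    have "card B = card A + card C"
      using c1 c2 c3 swp cA cJ eqB' by (simp add: Int_commute)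
    then show ?thesis unfolding nN B_def A_def C_def .
  qed
qed

lemma general:
  assumes H: "\<And>i j. (i,j) \<in> D \<Longrightarrow> 2 \<le> j \<Longrightarrow> (i, j-1) \<in> D \<or> (2 \<le> i \<and> (i-1, j) \<in> D)"
    and c: "1 \<le> c"
  shows "card (Aset c D n) = card (Bset c D n n)"
proof (cases "finite D \<and> card D = n")
  case True
  have "Bset c D n 1 = {}"
  proof (rule ccontr)
    assume "Bset c D n 1 \<noteq> {}"
    then obtain T i j where T: "standard_tableau D n T" "(i,j) \<in> D" "T (i,j) = 1" "c + 1 \<le> j"
      by (auto simp: Bset_def)
    note p = st_props[OF T(1)]
    have "2 \<le> j" using T c by simp
    then consider "(i, j-1) \<in> D" | "2 \<le> i" "(i-1, j) \<in> D" using H T by blast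
    then show False
    proof cases
      case 1
      have "T (i, j-1) < T (i, j-1+1)" using p(7)[of i "j-1"] 1 T \<open>2 \<le> j\<close> by simp
      then show False using p(3)[OF 1] T \<open>2 \<le> j\<close> by simp
    next
      case 2
      have "T (i-1, j) < T (i-1+1, j)" using p(8)[of "i-1" j] 2 T by simp
      then show False using p(3)[OF 2(2)] T 2 by simp
    qed
  qed
  then show ?thesis using main[of D n c] True by simp
next
  case False
  then have "Aset c D n = {}" "Bset c D n n = {}"
    using st_props(1,2) by (auto simp: Aset_def Bset_def)
  then show ?thesis by simp
qed

lemma young_H: "(i,j) \<in> young_diagram lam \<Longrightarrow> 2 \<le> j \<Longrightarrow> (i, j-1) \<in> young_diagram lam \<or> (2 \<le> i \<and> (i-1, j) \<in> young_diagram lam)"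
  by (auto simp: young_diagram_def)

lemma shifted_H:
  assumes sp: "strict_partition lam"
  shows "(i,j) \<in> shifted_diagram lam \<Longrightarrow> 2 \<le> j \<Longrightarrow> (i, j-1) \<in> shifted_diagram lam \<or> (2 \<le> i \<and> (i-1, j) \<in> shifted_diagram lam)"
proof -
  assume a: "(i,j) \<in> shifted_diagram lam" and j2: "2 \<le> j"
  then obtain k where k: "j = k + i - 1" "1 \<le> i" "i \<le> length lam" "1 \<le> k" "k \<le> lam ! (i - 1)"
    by (auto simp: shifted_diagram_def)
  show ?thesis
  proof (cases "2 \<le> k")
    case True
    then have "(i, (k-1) + i - 1) \<in> shifted_diagram lam" unfolding shifted_diagram_def using k True by (intro CollectI exI[of _ i] exI[of _ "k-1"]) auto
    moreover have "(k-1) + i - 1 = j - 1" using k True by simp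
    ultimately show ?thesis by simp
  next
    case False
    then have k1: "k = 1" using k by simp
    then have i2: "2 \<le> i" using k j2 by simp
    have "lam ! (i - 2) > lam ! (i - 1)"
      using sp i2 k(3) unfolding strict_partition_def by (simp add: sorted_wrt_iff_nth_less)
    moreover have "lam ! (i - 1) \<ge> 1" using k by simp
    ultimately have le: "2 \<le> lam ! ((i - 1) - 1)" by (simp add: numeral_2_eq_2)
    have "(i - 1, 2 + (i - 1) - 1) \<in> shifted_diagram lam"
      unfolding shifted_diagram_def using i2 k(3) le by (intro CollectI exI[of _ "i-1"] exI[of _ 2]) auto
    moreover have "2 + (i - 1) - 1 = j" using k k1 i2 by simp
    ultimately show ?thesis using i2 by simp
  qed
qed

theorem mainTheorem11:
  fixes lam :: "nat list" and c :: nat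
  assumes "c \<ge> 1"
  shows "(partition lam \<longrightarrow>
           card {(T, u). standard_tableau (young_diagram lam) (size_part lam) T
                         \<and> horiz_adj (young_diagram lam) T u \<and> snd u = c}
         = card {T. standard_tableau (young_diagram lam) (size_part lam) T
                    \<and> (\<exists>u\<in>young_diagram lam. T u = size_part lam \<and> snd u \<ge> c + 1)})
       \<and> (strict_partition lam \<longrightarrow>
           card {(T, u). standard_tableau (shifted_diagram lam) (size_part lam) T
                         \<and> horiz_adj (shifted_diagram lam) T u \<and> snd u = c}
         = card {T. standard_tableau (shifted_diagram lam) (size_part lam) T
                    \<and> (\<exists>u\<in>shifted_diagram lam. T u = size_part lam \<and> snd u \<ge> c + 1)})"
proof (intro conjI impI)
  show "card {(T, u). standard_tableau (young_diagram lam) (size_part lam) T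
                         \<and> horiz_adj (young_diagram lam) T u \<and> snd u = c}
         = card {T. standard_tableau (young_diagram lam) (size_part lam) T
                    \<and> (\<exists>u\<in>young_diagram lam. T u = size_part lam \<and> snd u \<ge> c + 1)}"
    using general[OF young_H assms, of lam "size_part lam"] unfolding Aset_def Bset_def .
  assume sp: "strict_partition lam"
  show "card {(T, u). standard_tableau (shifted_diagram lam) (size_part lam) T
                         \<and> horiz_adj (shifted_diagram lam) T u \<and> snd u = c}
         = card {T. standard_tableau (shifted_diagram lam) (size_part lam) T
                    \<and> (\<exists>u\<in>shifted_diagram lam. T u = size_part lam \<and> snd u \<ge> c + 1)}"
    using general[OF shifted_H[OF sp] assms, of "size_part lam"] unfolding Aset_def Bset_def .
qed

end
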